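(* Let $P$ be a poset with least element $0$. Then the strong metric dimension $\mathrm{sdim}_M(G(P))$ is finite if and only if $G(P)$ is a finite graph.
   Context: For a poset $P$ with $0$ and $A\subseteq P$, $A^{\ell}=\{b\in P: b\le a \text{ for all } a\in A\}$. $Z^*(P)$ is the set of nonzero $a\in P$ for which some nonzero $b$ satisfies $\{a,b\}^{\ell}=\{0\}$. The zero-divisor graph $G(P)$ has vertex set $Z^*(P)$, distinct $a,b$ adjacent iff $\{a,b\}^{\ell}=\{0\}$. In a connected graph $G$, a vertex $w$ strongly resolves vertices $u,v$ if some shortest $u$–$w$ path contains $v$ or some shortest $v$–$w$ path contains $u$. A set $W\subseteq V(G)$ is a strong resolving set if every pair of vertices is strongly resolved by some vertex of $W$; $\mathrm{sdim}_M(G)$ is the minimum cardinality of a strong resolving set. *)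

theory Defs
  imports Main "HOL-Library.Extended_Nat"
begin

text \<open>Posets with least element 0 are modelled as types of class order_bot; 0 is bot.\<close>

definition lowerset :: "'a::order_bot set \<Rightarrow> 'a set" where
  "lowerset A = {b. \<forall>a\<in>A. b \<le> a}"

definition Zstar :: "'a::order_bot set" where
  "Zstar = {a. a \<noteq> bot \<and> (\<exists>b. b \<noteq> bot \<and> lowerset {a, b} = {bot})}"

definition zadj :: "'a::order_bot \<Rightarrow> 'a \<Rightarrow> bool" where
  "zadj a b \<longleftrightarrow> a \<in> Zstar \<and> b \<in> Zstar \<and> a \<noteq> b \<and> lowerset {a, b} = {bot}"

definition walk :: "'v set \<Rightarrow> ('v \<Rightarrow> 'v \<Rightarrow> bool) \<Rightarrow> 'v list \<Rightarrow> bool" where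
  "walk V E xs \<longleftrightarrow> xs \<noteq> [] \<and> set xs \<subseteq> V \<and> successively E xs"

definition gdist :: "'v set \<Rightarrow> ('v \<Rightarrow> 'v \<Rightarrow> bool) \<Rightarrow> 'v \<Rightarrow> 'v \<Rightarrow> nat" where
  "gdist V E u v = (LEAST n. \<exists>xs. walk V E xs \<and> hd xs = u \<and> last xs = v \<and> length xs = Suc n)"

definition shortest_path :: "'v set \<Rightarrow> ('v \<Rightarrow> 'v \<Rightarrow> bool) \<Rightarrow> 'v \<Rightarrow> 'v \<Rightarrow> 'v list \<Rightarrow> bool" where
  "shortest_path V E u v xs \<longleftrightarrow> walk V E xs \<and> hd xs = u \<and> last xs = v
      \<and> length xs = Suc (gdist V E u v)"

definition strongly_resolves :: "'v set \<Rightarrow> ('v \<Rightarrow> 'v \<Rightarrow> bool) \<Rightarrow> 'v \<Rightarrow> 'v \<Rightarrow> 'v \<Rightarrow> bool" where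
  "strongly_resolves V E w u v \<longleftrightarrow>
     (\<exists>xs. shortest_path V E u w xs \<and> v \<in> set xs) \<or>
     (\<exists>xs. shortest_path V E v w xs \<and> u \<in> set xs)"

definition strong_resolving_set :: "'v set \<Rightarrow> ('v \<Rightarrow> 'v \<Rightarrow> bool) \<Rightarrow> 'v set \<Rightarrow> bool" where
  "strong_resolving_set V E W \<longleftrightarrow> W \<subseteq> V \<and>
     (\<forall>u\<in>V. \<forall>v\<in>V. \<exists>w\<in>W. strongly_resolves V E w u v)"

definition sdimM :: "'v set \<Rightarrow> ('v \<Rightarrow> 'v \<Rightarrow> bool) \<Rightarrow> enat" where
  "sdimM V E = (INF W \<in> {W. strong_resolving_set V E W}. (if finite W then enat (card W) else \<infinity>))"

end

theory Submission
  imports Defs "HOL-Library.FuncSet"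
begin

lemma bot_in_lowerset: "bot \<in> lowerset A"
  by (simp add: lowerset_def)

lemma zadj_of:
  fixes a b :: "'a::order_bot"
  assumes "a \<noteq> bot" "b \<noteq> bot" "lowerset {a,b} = {bot}"
  shows "zadj a b"
proof -
  have a: "a \<in> Zstar" using assms unfolding Zstar_def by blast
  have "lowerset {b,a} = {bot}" using assms(3) by (simp add: insert_commute)
  hence b: "b \<in> Zstar" using assms unfolding Zstar_def by blast
  have "a \<noteq> b"
  proof
    assume "a = b"
    hence "a \<in> lowerset {a,b}" by (simp add: lowerset_def)
    thus False using assms by simp
  qed
  thus ?thesis using a b assms unfolding zadj_def by blast
qed

lemma zadj_sym: "zadj a b \<Longrightarrow> zadj b a"
  unfolding zadj_def by (auto simp: insert_commute)

lemma Zstar_nb: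
  fixes a :: "'a::order_bot"
  assumes "a \<in> Zstar"
  obtains x where "x \<noteq> bot" "lowerset {a,x} = {bot}" "zadj a x"
  using assms zadj_of unfolding Zstar_def by blast

lemma conn:
  fixes a c :: "'a::order_bot"
  assumes "a \<in> Zstar" "c \<in> Zstar"
  shows "\<exists>xs. walk Zstar zadj xs \<and> hd xs = a \<and> last xs = c \<and> length xs \<le> 4"
proof -
  have an: "a \<noteq> bot" and cn: "c \<noteq> bot" using assms unfolding Zstar_def by auto
  have zs: "zadj u v \<Longrightarrow> u \<in> Zstar \<and> v \<in> Zstar" for u v :: 'a unfolding zadj_def by auto
  show ?thesis
  proof (cases "lowerset {a,c} = {bot}")
    case True
    show ?thesis
    proof (cases "a = c")
      case True
      thus ?thesis using assms by (intro exI[of _ "[a]"]) (auto simp: walk_def)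
    next
      case False
      hence "zadj a c" using zadj_of[OF an cn] \<open>lowerset {a,c} = {bot}\<close> by blast
      thus ?thesis using assms by (intro exI[of _ "[a,c]"]) (auto simp: walk_def)
    qed
  next
    case F: False
    obtain x where x: "x \<noteq> bot" "lowerset {a,x} = {bot}" "zadj a x" using Zstar_nb[OF assms(1)] .
    obtain y where y: "y \<noteq> bot" "lowerset {c,y} = {bot}" "zadj c y" using Zstar_nb[OF assms(2)] .
    show ?thesis
    proof (cases "lowerset {x,y} = {bot}")
      case True
      hence "zadj x y" using zadj_of x y by blast
      moreover have "zadj y c" using zadj_sym y by blast
      ultimately show ?thesis using x(3) zs
        by (intro exI[of _ "[a,x,y,c]"]) (auto simp: walk_def)
    next
      case False
      then obtain z where z: "z \<in> lowerset {x,y}" "z \<noteq> bot" using bot_in_lowerset by blast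
      hence zx: "z \<le> x" and zy: "z \<le> y" by (auto simp: lowerset_def)
      have "lowerset {a,z} = {bot}"
      proof
        show "lowerset {a,z} \<subseteq> {bot}"
        proof
          fix b assume "b \<in> lowerset {a,z}"
          hence "b \<in> lowerset {a,x}" using zx order_trans by (auto simp: lowerset_def)
          thus "b \<in> {bot}" using x by simp
        qed
      qed (simp add: bot_in_lowerset)
      hence az: "zadj a z" using zadj_of an z by blast
      have "lowerset {c,z} = {bot}"
      proof
        show "lowerset {c,z} \<subseteq> {bot}"
        proof
          fix b assume "b \<in> lowerset {c,z}"
          hence "b \<in> lowerset {c,y}" using zy order_trans by (auto simp: lowerset_def)
          thus "b \<in> {bot}" using y by simp
        qed
      qed (simp add: bot_in_lowerset)
      hence "zadj c z" using zadj_of cn z by blast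
      hence "zadj z c" by (rule zadj_sym)
      thus ?thesis using az zs
        by (intro exI[of _ "[a,z,c]"]) (auto simp: walk_def)
    qed
  qed
qed

lemma gdist_ex:
  assumes "\<exists>xs. walk V E xs \<and> hd xs = u \<and> last xs = v"
  shows "\<exists>xs. walk V E xs \<and> hd xs = u \<and> last xs = v \<and> length xs = Suc (gdist V E u v)"
proof -
  from assms obtain xs where xs: "walk V E xs" "hd xs = u" "last xs = v" by blast
  hence "length xs = Suc (length xs - 1)" by (cases xs) (auto simp: walk_def)
  hence "\<exists>n xs. walk V E xs \<and> hd xs = u \<and> last xs = v \<and> length xs = Suc n" using xs by blast
  thus ?thesis unfolding gdist_def by (rule LeastI_ex)
qed

lemma gdist_le:
  assumes "walk V E xs" "hd xs = u" "last xs = v" "length xs = Suc n"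
  shows "gdist V E u v \<le> n"
  unfolding gdist_def using assms by (intro Least_le) blast

lemma gdist_split:
  assumes "shortest_path V E u w xs" "v \<in> set xs"
  shows "gdist V E u v + gdist V E v w \<le> gdist V E u w"
proof -
  from assms obtain i where i: "i < length xs" "xs ! i = v" by (meson in_set_conv_nth)
  have w: "walk V E xs" "hd xs = u" "last xs = w" "length xs = Suc (gdist V E u w)"
    using assms(1) unfolding shortest_path_def by auto
  let ?p = "take (Suc i) xs" and ?q = "drop i xs"
  have s1: "successively E ?p"
    using w(1) successively_append_iff[of E ?p "drop (Suc i) xs"] by (simp add: walk_def)
  have s2: "successively E ?q"
    using w(1) successively_append_iff[of E "take i xs" ?q] by (simp add: walk_def)
  have set1: "set ?p \<subseteq> V" "set ?q \<subseteq> V" using w(1) unfolding walk_def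
    by (meson order_trans set_take_subset set_drop_subset)+
  have "xs \<noteq> []" using i by auto
  have wp: "walk V E ?p" using s1 set1 i by (auto simp: walk_def)
  have hp: "hd ?p = u" using w(2) i by (cases xs) auto
  have lp: "last ?p = v" using i by (simp add: take_Suc_conv_app_nth)
  have wq: "walk V E ?q" using s2 set1 i by (auto simp: walk_def)
  have hq: "hd ?q = v" using i by (simp add: hd_drop_conv_nth)
  have lq: "last ?q = w" using i w(3) by simp
  have "gdist V E u v \<le> i" using gdist_le[OF wp hp lp] i by simp
  moreover have "gdist V E v w \<le> length xs - Suc i"
    using gdist_le[OF wq hq lq] i by simp
  ultimately show ?thesis using w(4) i by linarith
qed

lemma gdist_zero:
  assumes "\<exists>xs. walk V E xs \<and> hd xs = u \<and> last xs = v" "gdist V E u v = 0"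
  shows "u = v"
proof -
  obtain xs where "walk V E xs" "hd xs = u" "last xs = v" "length xs = Suc 0"
    using gdist_ex[OF assms(1)] assms(2) by auto
  thus ?thesis by (cases xs) auto
qed

theorem mainTheorem2:
  shows "sdimM (Zstar :: 'a::order_bot set) zadj \<noteq> \<infinity> \<longleftrightarrow> finite (Zstar :: 'a set)"
proof
  assume fin: "finite (Zstar :: 'a set)"
  have srs: "strong_resolving_set (Zstar :: 'a set) zadj Zstar"
    unfolding strong_resolving_set_def
  proof (intro conjI ballI)
    fix u v :: 'a assume "u \<in> Zstar" "v \<in> Zstar"
    have "\<exists>xs. walk Zstar zadj xs \<and> hd xs = u \<and> last xs = v"
      using conn[OF \<open>u \<in> Zstar\<close> \<open>v \<in> Zstar\<close>] by blast
    from gdist_ex[OF this] obtain xs where "shortest_path Zstar zadj u v xs"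
      unfolding shortest_path_def by blast
    moreover have "v \<in> set xs" using calculation unfolding shortest_path_def walk_def
      using last_in_set by blast
    ultimately show "\<exists>w\<in>Zstar. strongly_resolves Zstar zadj w u v"
      using \<open>v \<in> Zstar\<close> unfolding strongly_resolves_def by blast
  qed simp
  have "sdimM (Zstar :: 'a set) zadj \<le> enat (card (Zstar :: 'a set))"
    unfolding sdimM_def using srs fin
    by (metis (mono_tags, lifting) INF_lower mem_Collect_eq)
  thus "sdimM (Zstar :: 'a set) zadj \<noteq> \<infinity>"
    using enat_ord_simps(5) by (metis infinity_ne_i0 enat_ord_simps(6) not_enat_eq)
next
  assume ne: "sdimM (Zstar :: 'a set) zadj \<noteq> \<infinity>"
  obtain W where W: "strong_resolving_set (Zstar :: 'a set) zadj W" "finite W"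
  proof (rule ccontr)
    assume "\<not> thesis"
    hence "\<forall>W. strong_resolving_set (Zstar :: 'a set) zadj W \<longrightarrow> \<not> finite W" using that by blast
    hence "sdimM (Zstar :: 'a set) zadj = \<infinity>" unfolding sdimM_def
      by (auto intro: INF_eqI)
    thus False using ne by simp
  qed
  have WZ: "W \<subseteq> Zstar" using W(1) unfolding strong_resolving_set_def by blast
  define f where "f u = restrict (\<lambda>w. gdist (Zstar :: 'a set) zadj u w) W" for u
  have "f ` Zstar \<subseteq> PiE W (\<lambda>_. {0..3::nat})"
  proof
    fix g assume "g \<in> f ` Zstar"
    then obtain u where u: "u \<in> Zstar" "g = f u" by blast
    have "gdist Zstar zadj u w \<le> 3" if wW: "w \<in> W" for w
    proof -
      obtain xs where "walk Zstar zadj xs" "hd xs = u" "last xs = w" "length xs \<le> 4"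
        using conn[OF u(1)] WZ wW by blast
      moreover have "length xs = Suc (length xs - 1)" using calculation by (cases xs) (auto simp: walk_def)
      ultimately have "gdist Zstar zadj u w \<le> length xs - 1" using gdist_le by metis
      thus ?thesis using \<open>length xs \<le> 4\<close> by linarith
    qed
    thus "g \<in> PiE W (\<lambda>_. {0..3::nat})" using u unfolding f_def by (auto simp: PiE_iff)
  qed
  hence finimg: "finite (f ` Zstar)" by (rule finite_subset) (auto intro: finite_PiE W(2))
  have "inj_on f Zstar"
  proof
    fix u v :: 'a assume uv: "u \<in> Zstar" "v \<in> Zstar" "f u = f v"
    obtain w where w: "w \<in> W" "strongly_resolves Zstar zadj w u v"
      using W(1) uv unfolding strong_resolving_set_def by blast
    have eq: "gdist Zstar zadj u w = gdist Zstar zadj v w"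
      using uv(3) w(1) unfolding f_def by (metis restrict_apply')
    show "u = v"
      using w(2) unfolding strongly_resolves_def
    proof
      assume "\<exists>xs. shortest_path Zstar zadj u w xs \<and> v \<in> set xs"
      hence "gdist Zstar zadj u v = 0" using gdist_split eq by fastforce
      moreover have "\<exists>xs. walk Zstar zadj xs \<and> hd xs = u \<and> last xs = v"
        using conn[OF uv(1) uv(2)] by blast
      ultimately show "u = v" using gdist_zero by metis
    next
      assume "\<exists>xs. shortest_path Zstar zadj v w xs \<and> u \<in> set xs"
      hence "gdist Zstar zadj v u = 0" using gdist_split eq by fastforce
      moreover have "\<exists>xs. walk Zstar zadj xs \<and> hd xs = v \<and> last xs = u"
        using conn[OF uv(2) uv(1)] by blast
      ultimately show "u = v" using gdist_zero by metis
    qed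
  qed
  thus "finite (Zstar :: 'a set)" using finimg finite_imageD by blast
qed

end
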